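(* Let $n\ge 1$, $y\in\mathbb{R}^n$ and $\lambda\ge 0$, and let $$\hat\theta^{(\lambda)}=\operatorname{argmin}_{\theta\in\mathbb{R}^n}\ \frac12\sum_{i=1}^n (y_i-\theta_i)^2+\lambda\sum_{i=1}^{n-1}|\theta_{i+1}-\theta_i|$$ be the (univariate) Total Variation Denoising / Fused Lasso estimator. Then for every $i\in[n]$, $$\max_{J\in\mathcal{I}:\, i\in J}\ \min_{I\in\mathcal{I}:\, i\in I,\ I\subseteq J}\Big[\overline{y}_I+C_{I,J}\frac{2\lambda}{|I|}\Big]\ \le\ \hat\theta^{(\lambda)}_i\ \le\ \min_{J\in\mathcal{I}:\, i\in J}\ \max_{I\in\mathcal{I}:\, i\in I,\ I\subseteq J}\Big[\overline{y}_I-C_{I,J}\frac{2\lambda}{|I|}\Big].$$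
   Context: $[n]=\{1,\dots,n\}$. An interval of $[n]$ is a set $[a:b]=\{a,a+1,\dots,b\}$ with $1\le a\le b\le n$; $\mathcal{I}$ denotes the set of all intervals of $[n]$, and $|I|$ the cardinality of $I$. For $I\subseteq[n]$, $\overline{y}_I$ is the average of the entries $y_j$, $j\in I$. For intervals $I\subseteq J$, with $J=[j_1:j_2]$: $C_{I,J}=1$ if $I$ contains neither endpoint $j_1$ nor $j_2$ of $J$; $C_{I,J}=-1$ if $I=J$; and $C_{I,J}=0$ otherwise. *)

theory Defs
  imports Complex_Main
begin

text \<open>Vectors in R^n are represented as functions nat => real; only indices 1..n matter.\<close>

definition tv_obj :: "nat \<Rightarrow> real \<Rightarrow> (nat \<Rightarrow> real) \<Rightarrow> (nat \<Rightarrow> real) \<Rightarrow> real" where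
  "tv_obj n lam y \<theta> =
     (1/2) * (\<Sum>i=1..n. (y i - \<theta> i)^2) + lam * (\<Sum>i=1..n-1. \<bar>\<theta> (i+1) - \<theta> i\<bar>)"

definition intervals :: "nat \<Rightarrow> nat set set" where
  "intervals n = {{a..b} | a b. 1 \<le> a \<and> a \<le> b \<and> b \<le> n}"

definition avg :: "(nat \<Rightarrow> real) \<Rightarrow> nat set \<Rightarrow> real" where
  "avg y I = (\<Sum>j\<in>I. y j) / real (card I)"

definition CIJ :: "nat set \<Rightarrow> nat set \<Rightarrow> real" where
  "CIJ I J = (if Min J \<notin> I \<and> Max J \<notin> I then 1 else if I = J then -1 else 0)"

end

theory Submission
  imports Defs
begin

lemma tv_neg: "tv_obj n lam (\<lambda>k. - y k) (\<lambda>k. - \<phi> k) = tv_obj n lam y \<phi>"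
proof -
  have 1: "(\<Sum>i=1..n. (- y i - - \<phi> i)^2) = (\<Sum>i=1..n. (y i - \<phi> i)^2)"
    by (rule sum.cong) (auto simp: power2_eq_square algebra_simps)
  have 2: "(\<Sum>i=1..n-1. \<bar>- \<phi> (i+1) - - \<phi> i\<bar>) = (\<Sum>i=1..n-1. \<bar>\<phi> (i+1) - \<phi> i\<bar>)"
    by (rule sum.cong) auto
  show ?thesis unfolding tv_obj_def 1 2 ..
qed

lemma delta:
  fixes y \<theta> :: "nat \<Rightarrow> real"
  assumes "1 \<le> c" "c \<le> a" "a \<le> b" "b \<le> d" "d \<le> n"
    and hI: "\<forall>j. a \<le> j \<and> j \<le> b \<longrightarrow> \<theta> i \<le> \<theta> j"
    and hla: "c < a \<longrightarrow> \<theta> (a-1) < \<theta> i"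
    and hrb: "b < d \<longrightarrow> \<theta> (b+1) < \<theta> i"
    and lam: "lam \<ge> 0"
    and e: "e > 0" "c < a \<longrightarrow> e \<le> \<theta> i - \<theta> (a-1)" "b < d \<longrightarrow> e \<le> \<theta> i - \<theta> (b+1)"
  shows "tv_obj n lam y (\<lambda>k. if k \<in> {a..b} then \<theta> k - e else \<theta> k) - tv_obj n lam y \<theta>
     \<le> e * ((\<Sum>k\<in>{a..b}. y k - \<theta> k) + real (card {a..b}) * e / 2
            + lam * ((if c < a then -1 else 1) + (if b < d then -1 else 1)))"
proof -
  define \<phi> where "\<phi> = (\<lambda>k. if k \<in> {a..b} then \<theta> k - e else \<theta> k)"
  define ta :: real where "ta = (if c < a then -1 else 1)"
  define tb :: real where "tb = (if b < d then -1 else 1)"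
  have q: "(\<Sum>k=1..n. (y k - \<phi> k)^2) - (\<Sum>k=1..n. (y k - \<theta> k)^2)
      = 2 * e * (\<Sum>k\<in>{a..b}. y k - \<theta> k) + real (card {a..b}) * e^2"
  proof -
    have "(\<Sum>k=1..n. (y k - \<phi> k)^2) - (\<Sum>k=1..n. (y k - \<theta> k)^2)
        = (\<Sum>k=1..n. (if k \<in> {a..b} then 2 * e * (y k - \<theta> k) + e^2 else 0))"
      unfolding sum_subtractf[symmetric]
      by (rule sum.cong) (auto simp: \<phi>_def power2_eq_square algebra_simps)
    also have "\<dots> = (\<Sum>k\<in>{a..b}. 2 * e * (y k - \<theta> k) + e^2)"
    proof -
      have "{1..n} \<inter> {a..b} = {a..b}" using assms(1-5) by auto
      then show ?thesis using sum.inter_restrict[OF finite_atLeastAtMost, of "\<lambda>k. 2 * e * (y k - \<theta> k) + e^2" 1 n "{a..b}"]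
        by metis
    qed
    also have "\<dots> = 2 * e * (\<Sum>k\<in>{a..b}. y k - \<theta> k) + real (card {a..b}) * e^2"
      by (simp add: sum.distrib sum_distrib_left)
    finally show ?thesis .
  qed
  define dd where "dd k = \<bar>\<phi> (k+1) - \<phi> k\<bar> - \<bar>\<theta> (k+1) - \<theta> k\<bar>" for k
  have pt: "dd k \<le> (if k = a - 1 then e * ta else 0) + (if k = b then e * tb else 0)"
    if k: "k \<in> {1..n-1}" for k
  proof -
    consider "k = a - 1" | "k = b" | "k \<noteq> a - 1" "k \<noteq> b" by blast
    then show ?thesis
    proof cases
      case 1
      then have k1: "k \<notin> {a..b}" "k + 1 \<in> {a..b}" "k \<noteq> b" using k assms(1-5) by auto
      have "dd k = \<bar>\<theta> (k+1) - e - \<theta> k\<bar> - \<bar>\<theta> (k+1) - \<theta> k\<bar>"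
        using k1 by (simp add: dd_def \<phi>_def)
      moreover have "c < a \<Longrightarrow> \<theta> k \<le> \<theta> (k+1) - e"
      proof -
        assume ca: "c < a"
        have "k + 1 = a" using 1 ca by simp
        moreover have "\<theta> i \<le> \<theta> a" using hI assms(3) by auto
        ultimately show ?thesis using e ca 1 by auto
      qed
      ultimately show ?thesis using k1 1 e(1) unfolding ta_def by (auto split: if_splits abs_split)
    next
      case 2
      then have k1: "k \<in> {a..b}" "k + 1 \<notin> {a..b}" "k \<noteq> a - 1" using k assms(1-5) by auto
      have "dd k = \<bar>\<theta> (k+1) - \<theta> k + e\<bar> - \<bar>\<theta> (k+1) - \<theta> k\<bar>"
        using k1 by (simp add: dd_def \<phi>_def)
      moreover have "b < d \<Longrightarrow> \<theta> (k+1) - \<theta> k + e \<le> 0"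
      proof -
        have "\<theta> i \<le> \<theta> b" using hI assms(3) by auto
        then show "b < d \<Longrightarrow> \<theta> (k+1) - \<theta> k + e \<le> 0" using e 2 by auto
      qed
      ultimately show ?thesis using k1 2 e(1) unfolding tb_def by (auto split: if_splits abs_split)
    next
      case 3
      then have "(k \<in> {a..b}) = (k + 1 \<in> {a..b})" using k assms(1-5) by auto
      then have "dd k = 0" by (auto simp: dd_def \<phi>_def)
      then show ?thesis using 3 by simp
    qed
  qed
  have tv: "(\<Sum>k=1..n-1. \<bar>\<phi> (k+1) - \<phi> k\<bar>) - (\<Sum>k=1..n-1. \<bar>\<theta> (k+1) - \<theta> k\<bar>) \<le> e * (ta + tb)"
  proof -
    have "(\<Sum>k=1..n-1. \<bar>\<phi> (k+1) - \<phi> k\<bar>) - (\<Sum>k=1..n-1. \<bar>\<theta> (k+1) - \<theta> k\<bar>) = (\<Sum>k=1..n-1. dd k)"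
      by (simp add: dd_def sum_subtractf)
    also have "\<dots> \<le> (\<Sum>k=1..n-1. (if k = a - 1 then e * ta else 0) + (if k = b then e * tb else 0))"
      by (rule sum_mono) (rule pt)
    also have "\<dots> = (if a - 1 \<in> {1..n-1} then e * ta else 0) + (if b \<in> {1..n-1} then e * tb else 0)"
      by (simp add: sum.distrib)
    also have "\<dots> \<le> e * (ta + tb)"
      using assms(1-5) e(1) unfolding ta_def tb_def by (auto simp: algebra_simps)
    finally show ?thesis .
  qed
  have "tv_obj n lam y \<phi> - tv_obj n lam y \<theta>
      = (1/2) * ((\<Sum>k=1..n. (y k - \<phi> k)^2) - (\<Sum>k=1..n. (y k - \<theta> k)^2))
        + lam * ((\<Sum>k=1..n-1. \<bar>\<phi> (k+1) - \<phi> k\<bar>) - (\<Sum>k=1..n-1. \<bar>\<theta> (k+1) - \<theta> k\<bar>))"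
    unfolding tv_obj_def by (simp add: algebra_simps)
  also have "\<dots> \<le> (1/2) * (2 * e * (\<Sum>k\<in>{a..b}. y k - \<theta> k) + real (card {a..b}) * e^2) + lam * (e * (ta + tb))"
    unfolding q using tv lam by (simp add: mult_left_mono)
  also have "\<dots> = e * ((\<Sum>k\<in>{a..b}. y k - \<theta> k) + real (card {a..b}) * e / 2 + lam * (ta + tb))"
    by (simp add: power2_eq_square algebra_simps)
  finally show ?thesis unfolding \<phi>_def ta_def tb_def .
qed


lemma sum_bound:
  fixes y \<theta> :: "nat \<Rightarrow> real"
  assumes ineq: "1 \<le> c" "c \<le> a" "a \<le> b" "b \<le> d" "d \<le> n"
    and hI: "\<forall>j. a \<le> j \<and> j \<le> b \<longrightarrow> \<theta> i \<le> \<theta> j"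
    and hla: "c < a \<longrightarrow> \<theta> (a-1) < \<theta> i"
    and hrb: "b < d \<longrightarrow> \<theta> (b+1) < \<theta> i"
    and lam: "lam \<ge> 0"
    and opt: "\<forall>\<phi>. tv_obj n lam y \<theta> \<le> tv_obj n lam y \<phi>"
  shows "(\<Sum>k\<in>{a..b}. y k - \<theta> k) \<ge> - lam * ((if c < a then -1 else 1) + (if b < d then -1 else 1))"
proof (rule ccontr)
  define S where "S = (\<Sum>k\<in>{a..b}. y k - \<theta> k)"
  define T :: real where "T = lam * ((if c < a then -1 else 1) + (if b < d then -1 else 1))"
  define m where "m = real (card {a..b})"
  assume "\<not> ?thesis"
  then have neg: "S + T < 0" unfolding S_def T_def by simp
  have mpos: "m > 0" unfolding m_def using ineq by simp
  define e0 :: real where "e0 = min (if c < a then \<theta> i - \<theta> (a-1) else 1) (if b < d then \<theta> i - \<theta> (b+1) else 1)"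
  have e0: "e0 > 0" unfolding e0_def using hla hrb by auto
  define e where "e = min e0 (- (S + T) / m)"
  have epos: "e > 0" unfolding e_def using e0 neg mpos by (simp add: field_simps)
  have e1: "c < a \<longrightarrow> e \<le> \<theta> i - \<theta> (a-1)" "b < d \<longrightarrow> e \<le> \<theta> i - \<theta> (b+1)"
    unfolding e_def e0_def by auto
  have "m * e \<le> - (S + T)" unfolding e_def using mpos
    by (metis min.cobounded2 mult.commute pos_le_divide_eq)
  then have "S + m * e / 2 + T < 0" using neg mpos epos by (simp add: field_simps)
  then have "e * (S + m * e / 2 + T) < 0" using epos by (simp add: mult_pos_neg)
  moreover have "tv_obj n lam y (\<lambda>k. if k \<in> {a..b} then \<theta> k - e else \<theta> k) - tv_obj n lam y \<theta>
     \<le> e * (S + m * e / 2 + T)"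
    using delta[OF ineq hI hla hrb lam epos e1] unfolding S_def T_def m_def by (simp add: algebra_simps)
  moreover have "tv_obj n lam y \<theta> \<le> tv_obj n lam y (\<lambda>k. if k \<in> {a..b} then \<theta> k - e else \<theta> k)"
    using opt by blast
  ultimately show False by linarith
qed

lemma core:
  fixes y \<theta> :: "nat \<Rightarrow> real"
  assumes ineq: "1 \<le> c" "c \<le> i" "i \<le> d" "d \<le> n"
    and lam: "lam \<ge> 0"
    and opt: "\<forall>\<phi>. tv_obj n lam y \<theta> \<le> tv_obj n lam y \<phi>"
  shows "\<exists>a b. c \<le> a \<and> a \<le> i \<and> i \<le> b \<and> b \<le> d \<and>
     \<theta> i \<le> avg y {a..b} - CIJ {a..b} {c..d} * (2 * lam / real (card {a..b}))"
proof -
  define A where "A = {k. c \<le> k \<and> k \<le> i \<and> (\<forall>j. k \<le> j \<and> j \<le> i \<longrightarrow> \<theta> i \<le> \<theta> j)}"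
  have iA: "i \<in> A" unfolding A_def using ineq by auto
  have fA: "finite A" unfolding A_def by (rule finite_subset[of _ "{c..i}"]) auto
  define a where "a = Min A"
  have aA: "a \<in> A" unfolding a_def using fA iA by (intro Min_in) auto
  have ha: "c \<le> a" "a \<le> i" "\<forall>j. a \<le> j \<and> j \<le> i \<longrightarrow> \<theta> i \<le> \<theta> j" using aA unfolding A_def by auto
  have hla: "c < a \<longrightarrow> \<theta> (a-1) < \<theta> i"
  proof
    assume ca: "c < a"
    have "a - 1 \<notin> A"
    proof
      assume "a - 1 \<in> A"
      then have "a \<le> a - 1" unfolding a_def using fA by (intro Min_le) auto
      then show False using ca by simp
    qed
    then obtain j where j: "a - 1 \<le> j" "j \<le> i" "\<not> \<theta> i \<le> \<theta> j" unfolding A_def using ca ha by auto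
    have "\<not> a \<le> j" using ha(3) j by auto
    then have "j = a - 1" using j(1) by arith
    then show "\<theta> (a-1) < \<theta> i" using j by simp
  qed
  define B where "B = {k. i \<le> k \<and> k \<le> d \<and> (\<forall>j. i \<le> j \<and> j \<le> k \<longrightarrow> \<theta> i \<le> \<theta> j)}"
  have iB: "i \<in> B" unfolding B_def using ineq by auto
  have fB: "finite B" unfolding B_def by (rule finite_subset[of _ "{i..d}"]) auto
  define b where "b = Max B"
  have bB: "b \<in> B" unfolding b_def using fB iB by (intro Max_in) auto
  have hb: "i \<le> b" "b \<le> d" "\<forall>j. i \<le> j \<and> j \<le> b \<longrightarrow> \<theta> i \<le> \<theta> j" using bB unfolding B_def by auto
  have hrb: "b < d \<longrightarrow> \<theta> (b+1) < \<theta> i"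
  proof
    assume bd: "b < d"
    have "b + 1 \<notin> B"
    proof
      assume "b + 1 \<in> B"
      then have "b + 1 \<le> b" unfolding b_def using fB by (intro Max_ge) auto
      then show False by simp
    qed
    then obtain j where j: "i \<le> j" "j \<le> b + 1" "\<not> \<theta> i \<le> \<theta> j" unfolding B_def using bd hb by auto
    have "\<not> j \<le> b" using hb(3) j by auto
    then have "j = b + 1" using j(2) by arith
    then show "\<theta> (b+1) < \<theta> i" using j by simp
  qed
  have hI: "\<forall>j. a \<le> j \<and> j \<le> b \<longrightarrow> \<theta> i \<le> \<theta> j" 
  proof (intro allI impI)
    fix j assume "a \<le> j \<and> j \<le> b"
    then show "\<theta> i \<le> \<theta> j" using ha(3) hb(3) by (cases "j \<le> i") auto
  qed
  have ab: "a \<le> b" using ha hb by simp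
  have sb: "(\<Sum>k\<in>{a..b}. y k - \<theta> k) \<ge> - lam * ((if c < a then -1 else 1) + (if b < d then -1 else 1))"
    using sum_bound[OF ineq(1) ha(1) ab hb(2) ineq(4) hI hla hrb lam opt] .
  define m where "m = real (card {a..b})"
  have mpos: "m > 0" unfolding m_def using ab by simp
  have sth: "(\<Sum>k\<in>{a..b}. \<theta> k) \<ge> m * \<theta> i"
  proof -
    have "(\<Sum>k\<in>{a..b}. \<theta> i) \<le> (\<Sum>k\<in>{a..b}. \<theta> k)" using hI by (intro sum_mono) auto
    then show ?thesis unfolding m_def by simp
  qed
  have sy: "(\<Sum>k\<in>{a..b}. y k) \<ge> m * \<theta> i - lam * ((if c < a then -1 else 1) + (if b < d then -1 else 1))"
    using sb sth by (simp add: sum_subtractf)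
  have av: "avg y {a..b} = (\<Sum>k\<in>{a..b}. y k) / m" unfolding avg_def m_def ..
  have mn: "Min {c..d} = c" "Max {c..d} = d" using ineq by (intro Min_eqI Max_eqI; auto)+
  have C: "CIJ {a..b} {c..d} = (if c < a \<and> b < d then 1 else if a = c \<and> b = d then -1 else 0)"
  proof -
    have e: "({a..b} = {c..d}) = (a = c \<and> b = d)" using ab ha hb ineq by (simp add: Icc_eq_Icc)
    have "(c \<notin> {a..b} \<and> d \<notin> {a..b}) = (c < a \<and> b < d)" using ab ha hb ineq by auto
    then show ?thesis unfolding CIJ_def mn e by simp
  qed
  have "\<theta> i \<le> avg y {a..b} - CIJ {a..b} {c..d} * (2 * lam / m)"
  proof (cases "c < a \<and> b < d")
    case True
    then show ?thesis unfolding av C using sy mpos by (simp add: field_simps)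
  next
    case f: False
    show ?thesis
    proof (cases "a = c \<and> b = d")
      case True
      then show ?thesis unfolding av C using sy mpos by (simp add: field_simps)
    next
      case False
      then have "(if c < a then -1 else 1) + (if b < d then -1 else 1) = (0::real)" using f ha(1) hb(2) by auto
      moreover have C0: "CIJ {a..b} {c..d} = 0" using C f False by simp
      ultimately show ?thesis unfolding av using sy mpos by (simp add: field_simps)
    qed
  qed
  then show ?thesis using ha hb unfolding m_def by blast
qed


lemma intervals_finite: "finite (intervals n)"
proof (rule finite_subset[of _ "Pow {1..n}"])
  show "intervals n \<subseteq> Pow {1..n}" unfolding intervals_def by auto
qed simp

lemma core_int:
  fixes y \<theta> :: "nat \<Rightarrow> real"
  assumes "lam \<ge> 0" "\<forall>\<phi>. tv_obj n lam y \<theta> \<le> tv_obj n lam y \<phi>"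
    and J: "J \<in> intervals n" "i \<in> J"
  shows "\<exists>I\<in>{I\<in>intervals n. i \<in> I \<and> I \<subseteq> J}. \<theta> i \<le> avg y I - CIJ I J * (2 * lam / real (card I))"
proof -
  obtain c d where cd: "J = {c..d}" "1 \<le> c" "c \<le> d" "d \<le> n" using J(1) unfolding intervals_def by auto
  then have "c \<le> i" "i \<le> d" using J(2) by auto
  from core[OF cd(2) this cd(4) assms(1,2)] obtain a b where
    ab: "c \<le> a" "a \<le> i" "i \<le> b" "b \<le> d"
      "\<theta> i \<le> avg y {a..b} - CIJ {a..b} {c..d} * (2 * lam / real (card {a..b}))" by blast
  have "{a..b} \<in> intervals n" unfolding intervals_def
    by (rule CollectI, rule exI[of _ a], rule exI[of _ b]) (use ab cd in simp)
  moreover have "i \<in> {a..b}" "{a..b} \<subseteq> J" using ab cd by auto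
  ultimately show ?thesis using ab(5) cd(1) by blast
qed

theorem theorem1:
  fixes n :: nat and y \<theta> :: "nat \<Rightarrow> real" and lam :: real and i :: nat
  assumes "n \<ge> 1" and "lam \<ge> 0"
    and "\<forall>\<phi>. tv_obj n lam y \<theta> \<le> tv_obj n lam y \<phi>"
    and "i \<in> {1..n}"
  shows "(MAX J\<in>{J\<in>intervals n. i \<in> J}.
            MIN I\<in>{I\<in>intervals n. i \<in> I \<and> I \<subseteq> J}. avg y I + CIJ I J * (2 * lam / real (card I)))
           \<le> \<theta> i
       \<and> \<theta> i \<le> (MIN J\<in>{J\<in>intervals n. i \<in> J}.
            MAX I\<in>{I\<in>intervals n. i \<in> I \<and> I \<subseteq> J}. avg y I - CIJ I J * (2 * lam / real (card I)))"
proof -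
  have fin: "finite {J\<in>intervals n. i \<in> J}" "\<And>J. finite {I\<in>intervals n. i \<in> I \<and> I \<subseteq> J}"
    using intervals_finite by auto
  have ii: "{i} \<in> intervals n"
  proof -
    have "{i..i} \<in> intervals n" unfolding intervals_def
      by (rule CollectI, rule exI[of _ i], rule exI[of _ i]) (use assms(4) in simp)
    then show ?thesis by simp
  qed
  have ne: "{J\<in>intervals n. i \<in> J} \<noteq> {}" using ii by auto
  have ne2: "\<And>J. i \<in> J \<Longrightarrow> {I\<in>intervals n. i \<in> I \<and> I \<subseteq> J} \<noteq> {}" using ii by auto
  have opt': "\<forall>\<phi>. tv_obj n lam (\<lambda>k. - y k) (\<lambda>k. - \<theta> k) \<le> tv_obj n lam (\<lambda>k. - y k) \<phi>"
  proof
    fix \<phi> :: "nat \<Rightarrow> real"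
    have "tv_obj n lam y \<theta> \<le> tv_obj n lam y (\<lambda>k. - \<phi> k)" using assms(3) by blast
    then show "tv_obj n lam (\<lambda>k. - y k) (\<lambda>k. - \<theta> k) \<le> tv_obj n lam (\<lambda>k. - y k) \<phi>"
      using tv_neg[of n lam y \<theta>] tv_neg[of n lam y "\<lambda>k. - \<phi> k"] by simp
  qed
  have avneg: "avg (\<lambda>k. - y k) I = - avg y I" for I unfolding avg_def by (simp add: sum_negf)
  have L: "(MAX J\<in>{J\<in>intervals n. i \<in> J}.
            MIN I\<in>{I\<in>intervals n. i \<in> I \<and> I \<subseteq> J}. avg y I + CIJ I J * (2 * lam / real (card I)))
           \<le> \<theta> i"
  proof (rule Max.boundedI)
    show "finite ((\<lambda>J. MIN I\<in>{I\<in>intervals n. i \<in> I \<and> I \<subseteq> J}. avg y I + CIJ I J * (2 * lam / real (card I))) ` {J\<in>intervals n. i \<in> J})" using fin by simp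
    show "((\<lambda>J. MIN I\<in>{I\<in>intervals n. i \<in> I \<and> I \<subseteq> J}. avg y I + CIJ I J * (2 * lam / real (card I))) ` {J\<in>intervals n. i \<in> J}) \<noteq> {}" using ne by simp
  next
    fix x assume "x \<in> (\<lambda>J. MIN I\<in>{I\<in>intervals n. i \<in> I \<and> I \<subseteq> J}. avg y I + CIJ I J * (2 * lam / real (card I))) ` {J\<in>intervals n. i \<in> J}"
    then obtain J where J: "J \<in> intervals n" "i \<in> J" and x: "x = (MIN I\<in>{I\<in>intervals n. i \<in> I \<and> I \<subseteq> J}. avg y I + CIJ I J * (2 * lam / real (card I)))" by auto
    obtain I where I: "I\<in>{I\<in>intervals n. i \<in> I \<and> I \<subseteq> J}"
        "- \<theta> i \<le> avg (\<lambda>k. - y k) I - CIJ I J * (2 * lam / real (card I))"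
      using core_int[OF assms(2) opt' J] by blast
    have "avg y I + CIJ I J * (2 * lam / real (card I)) \<le> \<theta> i" using I(2) unfolding avneg by simp
    moreover have "x \<le> avg y I + CIJ I J * (2 * lam / real (card I))"
      unfolding x using I(1) fin(2) by (intro Min_le) auto
    ultimately show "x \<le> \<theta> i" by linarith
  qed
  have R: "\<theta> i \<le> (MIN J\<in>{J\<in>intervals n. i \<in> J}.
            MAX I\<in>{I\<in>intervals n. i \<in> I \<and> I \<subseteq> J}. avg y I - CIJ I J * (2 * lam / real (card I)))"
  proof (rule Min.boundedI)
    show "finite ((\<lambda>J. MAX I\<in>{I\<in>intervals n. i \<in> I \<and> I \<subseteq> J}. avg y I - CIJ I J * (2 * lam / real (card I))) ` {J\<in>intervals n. i \<in> J})" using fin by simp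
    show "((\<lambda>J. MAX I\<in>{I\<in>intervals n. i \<in> I \<and> I \<subseteq> J}. avg y I - CIJ I J * (2 * lam / real (card I))) ` {J\<in>intervals n. i \<in> J}) \<noteq> {}" using ne by simp
  next
    fix x assume "x \<in> (\<lambda>J. MAX I\<in>{I\<in>intervals n. i \<in> I \<and> I \<subseteq> J}. avg y I - CIJ I J * (2 * lam / real (card I))) ` {J\<in>intervals n. i \<in> J}"
    then obtain J where J: "J \<in> intervals n" "i \<in> J" and x: "x = (MAX I\<in>{I\<in>intervals n. i \<in> I \<and> I \<subseteq> J}. avg y I - CIJ I J * (2 * lam / real (card I)))" by auto
    obtain I where I: "I\<in>{I\<in>intervals n. i \<in> I \<and> I \<subseteq> J}"
        "\<theta> i \<le> avg y I - CIJ I J * (2 * lam / real (card I))"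
      using core_int[OF assms(2,3) J] by blast
    moreover have "avg y I - CIJ I J * (2 * lam / real (card I)) \<le> x"
      unfolding x using I(1) fin(2) by (intro Max_ge) auto
    ultimately show "\<theta> i \<le> x" by linarith
  qed
  show ?thesis using L R by blast
qed

end
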